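(* Let $\mathcal{H}$ be a Hilbert space of finite dimension $d\ge2$, let $\mathcal{F}(\mathcal{H})\subseteq\mathcal{D}(\mathcal{H})$ be a closed set of free states (not assumed convex), and let $\rho\in\mathcal{D}(\mathcal{H})\setminus\mathcal{F}(\mathcal{H})$. Then there exists a family of channel ensembles $\big(\{p_i,\Lambda_i^{(m)}\}_i\big)_{m=2}^d$ such that \[\min_{\sigma\in\mathcal{F}(\mathcal{H})}\ \max_{m=2,\dots,d}\ \frac{\max_{\{M_i^{(m)}\}_i}p_{\mathrm{succ}}(\{p_i,\Lambda_i^{(m)}\}_i,\{M_i^{(m)}\}_i,\rho^{\otimes m})}{\max_{\{M_i^{(m)}\}_i}p_{\mathrm{succ}}(\{p_i,\Lambda_i^{(m)}\}_i,\{M_i^{(m)}\}_i,\sigma^{\otimes m})}>1.\]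
   Context: $\mathcal{D}(\mathcal{H})$ is the set of density operators on $\mathcal{H}$. A channel ensemble $\{p_i,\Lambda_i^{(m)}\}_i$ is a finite probability distribution $(p_i)_i$ together with quantum channels (completely positive trace-preserving maps) $\Lambda_i^{(m)}$ from operators on $\mathcal{H}^{\otimes m}$ to operators on a common finite-dimensional output space. For a POVM $\{M_i\}_i$ on the output space (same index set) and a state $\omega$ on $\mathcal{H}^{\otimes m}$, the success probability is $p_{\mathrm{succ}}(\{p_i,\Lambda_i^{(m)}\}_i,\{M_i\}_i,\omega)=\sum_ip_i\operatorname{tr}[M_i\Lambda_i^{(m)}(\omega)]$; the maxima are over all such POVMs. *)

theory Defs
  imports "HOL-Analysis.Analysis" "Jordan_Normal_Form.Matrix"
begin

text \<open>Operators on a d-dimensional Hilbert space are represented as d x d complex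
  matrices (Jordan_Normal_Form matrices).  The space H tensor m has dimension d^m.\<close>

definition trace_op :: "complex mat \<Rightarrow> complex" where
  "trace_op A = (\<Sum>i<dim_row A. A $$ (i,i))"

definition hermitian_op :: "nat \<Rightarrow> complex mat \<Rightarrow> bool" where
  "hermitian_op n A \<longleftrightarrow> A \<in> carrier_mat n n \<and>
     (\<forall>i<n. \<forall>j<n. A $$ (i,j) = cnj (A $$ (j,i)))"

definition psd_op :: "nat \<Rightarrow> complex mat \<Rightarrow> bool" where
  "psd_op n A \<longleftrightarrow> hermitian_op n A \<and>
     (\<forall>v :: nat \<Rightarrow> complex. 0 \<le> Re (\<Sum>i<n. \<Sum>j<n. cnj (v i) * A $$ (i,j) * v j))"

definition density_ops :: "nat \<Rightarrow> complex mat set" where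
  "density_ops n = {A. psd_op n A \<and> trace_op A = 1}"

text \<open>Closedness w.r.t. the (unique) Hausdorff vector topology on n x n matrices,
  i.e. entrywise convergence.\<close>
definition closed_ops :: "nat \<Rightarrow> complex mat set \<Rightarrow> bool" where
  "closed_ops n S \<longleftrightarrow> S \<subseteq> carrier_mat n n \<and>
     (\<forall>X A. (\<forall>k. X k \<in> S) \<longrightarrow> A \<in> carrier_mat n n \<longrightarrow>
        (\<forall>i<n. \<forall>j<n. (\<lambda>k. X k $$ (i,j)) \<longlonglongrightarrow> A $$ (i,j)) \<longrightarrow> A \<in> S)"

definition kron :: "complex mat \<Rightarrow> complex mat \<Rightarrow> complex mat" where
  "kron A B = mat (dim_row A * dim_row B) (dim_col A * dim_col B)
     (\<lambda>(i,j). A $$ (i div dim_row B, j div dim_col B) * B $$ (i mod dim_row B, j mod dim_col B))"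

fun tensor_pow :: "nat \<Rightarrow> complex mat \<Rightarrow> complex mat" where
  "tensor_pow 0 A = 1\<^sub>m 1"
| "tensor_pow (Suc m) A = kron A (tensor_pow m A)"

text \<open>The map id_r tensor Phi applied to an (r*n) x (r*n) matrix viewed as an r x r block
  matrix with n x n blocks; the output has k x k blocks.\<close>
definition block_op :: "nat \<Rightarrow> complex mat \<Rightarrow> nat \<Rightarrow> nat \<Rightarrow> complex mat" where
  "block_op n X a b = mat n n (\<lambda>(p,q). X $$ (a*n + p, b*n + q))"

definition ampliate :: "nat \<Rightarrow> nat \<Rightarrow> nat \<Rightarrow> (complex mat \<Rightarrow> complex mat) \<Rightarrow> complex mat \<Rightarrow> complex mat" where
  "ampliate r n k \<Phi> X = mat (r*k) (r*k)
     (\<lambda>(i,j). \<Phi> (block_op n X (i div k) (j div k)) $$ (i mod k, j mod k))"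

definition channel :: "nat \<Rightarrow> nat \<Rightarrow> (complex mat \<Rightarrow> complex mat) \<Rightarrow> bool" where
  "channel n k \<Phi> \<longleftrightarrow>
     (\<forall>A\<in>carrier_mat n n. \<Phi> A \<in> carrier_mat k k) \<and>
     (\<forall>A\<in>carrier_mat n n. \<forall>B\<in>carrier_mat n n. \<Phi> (A + B) = \<Phi> A + \<Phi> B) \<and>
     (\<forall>A\<in>carrier_mat n n. \<forall>c. \<Phi> (c \<cdot>\<^sub>m A) = c \<cdot>\<^sub>m \<Phi> A) \<and>
     (\<forall>A\<in>carrier_mat n n. trace_op (\<Phi> A) = trace_op A) \<and>
     (\<forall>r X. psd_op (r*n) X \<longrightarrow> psd_op (r*k) (ampliate r n k \<Phi> X))"

definition prob_dist :: "'i set \<Rightarrow> ('i \<Rightarrow> real) \<Rightarrow> bool" where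
  "prob_dist I p \<longleftrightarrow> finite I \<and> (\<forall>i\<in>I. 0 \<le> p i) \<and> (\<Sum>i\<in>I. p i) = 1"

definition povm :: "nat \<Rightarrow> 'i set \<Rightarrow> ('i \<Rightarrow> complex mat) \<Rightarrow> bool" where
  "povm k I M \<longleftrightarrow> (\<forall>i\<in>I. psd_op k (M i)) \<and>
     (\<forall>a<k. \<forall>b<k. (\<Sum>i\<in>I. M i $$ (a,b)) = (if a = b then 1 else 0))"

definition p_succ :: "'i set \<Rightarrow> ('i \<Rightarrow> real) \<Rightarrow> ('i \<Rightarrow> complex mat \<Rightarrow> complex mat)
    \<Rightarrow> ('i \<Rightarrow> complex mat) \<Rightarrow> complex mat \<Rightarrow> real" where
  "p_succ I p \<Lambda> M \<omega> = (\<Sum>i\<in>I. p i * Re (trace_op (M i * \<Lambda> i \<omega>)))"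

definition opt_p_succ :: "'i set \<Rightarrow> ('i \<Rightarrow> real) \<Rightarrow> ('i \<Rightarrow> complex mat \<Rightarrow> complex mat)
    \<Rightarrow> nat \<Rightarrow> complex mat \<Rightarrow> real" where
  "opt_p_succ I p \<Lambda> k \<omega> = Sup {p_succ I p \<Lambda> M \<omega> | M. povm k I M}"

end

theory Submission
  imports Defs
begin


definition quad :: "nat \<Rightarrow> (nat \<Rightarrow> complex) \<Rightarrow> complex mat \<Rightarrow> complex" where
  "quad n v A = (\<Sum>i<n. \<Sum>j<n. cnj (v i) * A $$ (i,j) * v j)"

definition gen_ch :: "nat \<Rightarrow> nat \<Rightarrow> 'j set \<Rightarrow> (nat \<Rightarrow> 'j \<Rightarrow> real) \<Rightarrow> ('j \<Rightarrow> nat \<Rightarrow> complex)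
   \<Rightarrow> complex mat \<Rightarrow> complex mat" where
  "gen_ch n k J g u X = mat k k (\<lambda>(x,y). if x = y then (\<Sum>j\<in>J. of_real (g x j) * quad n (u j) X) else 0)"

lemma sum_split: fixes f :: "nat \<Rightarrow> 'a::comm_monoid_add" and r k :: nat shows "(\<Sum>i<r*k. f i) = (\<Sum>a<r. \<Sum>x<k. f (a*k+x))"
proof -
  have "(\<Sum>i<r*k. f i) = (\<Sum>a<r. sum f {a*k..<a*k+k})"
    using sum.nat_group[of f k r] by simp
  also have "\<dots> = (\<Sum>a<r. \<Sum>x<k. f (a*k+x))"
  proof (rule sum.cong[OF refl])
    fix a
    show "sum f {a*k..<a*k+k} = (\<Sum>x<k. f (a*k+x))"
      by (rule sum.reindex_bij_witness[of _ "\<lambda>x. a*k + x" "\<lambda>i. i - a*k"]) auto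
  qed
  finally show ?thesis .
qed

lemma divmod_aux: "(p::nat) < n \<Longrightarrow> (a*n+p) div n = a \<and> (a*n+p) mod n = p"
  by simp

lemma lt_aux: "(p::nat) < n \<Longrightarrow> a < r \<Longrightarrow> a*n+p < r*n"
proof -
  assume "p < n" "a < r"
  then have "a*n+p < a*n + n" by simp
  also have "\<dots> = (a+1)*n" by simp
  also have "\<dots> \<le> r*n" using \<open>a<r\<close> by (intro mult_right_mono) auto
  finally show ?thesis .
qed

lemma quad_sum_trace:
  assumes X: "X \<in> carrier_mat n n" and fin: "finite J"
    and id: "\<forall>a<n. \<forall>b<n. (\<Sum>j\<in>J. of_real (g j) * cnj (u j a) * u j b) = (if a = b then 1 else 0)"
  shows "(\<Sum>j\<in>J. of_real (g j) * quad n (u j) X) = trace_op X"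
proof -
  have "(\<Sum>j\<in>J. of_real (g j) * quad n (u j) X)
      = (\<Sum>j\<in>J. \<Sum>a<n. \<Sum>b<n. X $$ (a,b) * (of_real (g j) * cnj (u j a) * u j b))"
    unfolding quad_def by (simp add: sum_distrib_left mult_ac)
  also have "\<dots> = (\<Sum>a<n. \<Sum>j\<in>J. \<Sum>b<n. X $$ (a,b) * (of_real (g j) * cnj (u j a) * u j b))"
    by (rule sum.swap)
  also have "\<dots> = (\<Sum>a<n. \<Sum>b<n. \<Sum>j\<in>J. X $$ (a,b) * (of_real (g j) * cnj (u j a) * u j b))"
    by (rule sum.cong[OF refl], rule sum.swap)
  also have "\<dots> = (\<Sum>a<n. \<Sum>b<n. X $$ (a,b) * (if a = b then 1 else 0))"
    using id by (simp add: sum_distrib_left[symmetric])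
  also have "\<dots> = (\<Sum>a<n. X $$ (a,a))"
    by (simp add: if_distrib cong: if_cong)
  also have "\<dots> = trace_op X" using X unfolding trace_op_def by simp
  finally show ?thesis .
qed

lemma quad_block: "quad n u (block_op n X a b) = (\<Sum>p<n. \<Sum>q<n. cnj (u p) * X $$ (a*n+p, b*n+q) * u q)"
  unfolding quad_def block_op_def by (intro sum.cong refl) simp

lemma psd_block_form:
  assumes "psd_op (r*n) X"
  shows "0 \<le> Re (\<Sum>a<r. \<Sum>b<r. cnj (V a) * quad n u (block_op n X a b) * V b)"
proof -
  define z where "z s = V (s div n) * u (s mod n)" for s
  have "0 \<le> Re (\<Sum>s<r*n. \<Sum>t<r*n. cnj (z s) * X $$ (s,t) * z t)"
    using assms unfolding psd_op_def by blast
  also have "(\<Sum>s<r*n. \<Sum>t<r*n. cnj (z s) * X $$ (s,t) * z t)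
     = (\<Sum>a<r. \<Sum>p<n. \<Sum>b<r. \<Sum>q<n. cnj (V a * u p) * X $$ (a*n+p, b*n+q) * (V b * u q))"
    unfolding sum_split by (intro sum.cong refl) (simp add: z_def divmod_aux)
  also have "\<dots> = (\<Sum>a<r. \<Sum>b<r. \<Sum>p<n. \<Sum>q<n. cnj (V a * u p) * X $$ (a*n+p, b*n+q) * (V b * u q))"
    by (rule sum.cong[OF refl], rule sum.swap)
  also have "\<dots> = (\<Sum>a<r. \<Sum>b<r. cnj (V a) * quad n u (block_op n X a b) * V b)"
    unfolding quad_block by (simp add: sum_distrib_left sum_distrib_right mult_ac)
  finally show ?thesis .
qed

lemma quad_block_cnj:
  assumes "hermitian_op (r*n) X" "a < r" "b < r"
  shows "cnj (quad n u (block_op n X b a)) = quad n u (block_op n X a b)"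
proof -
  have h: "cnj (X $$ (b*n+p, a*n+q)) = X $$ (a*n+q, b*n+p)" if "p<n" "q<n" for p q
    using assms that lt_aux unfolding hermitian_op_def by (metis complex_cnj_cnj)
  have "cnj (quad n u (block_op n X b a)) = (\<Sum>p<n. \<Sum>q<n. u p * X $$ (a*n+q, b*n+p) * cnj (u q))"
    unfolding quad_block cnj_sum by (intro sum.cong refl) (simp add: h)
  also have "\<dots> = (\<Sum>q<n. \<Sum>p<n. u p * X $$ (a*n+q, b*n+p) * cnj (u q))"
    by (rule sum.swap)
  also have "\<dots> = quad n u (block_op n X a b)"
    unfolding quad_block by (simp add: mult_ac)
  finally show ?thesis .
qed

lemma sum_delta_aux:
  fixes c S :: complex and x k :: nat
  assumes "x < k"
  shows "(\<Sum>y<k. c * (if x = y then S else 0) * w y) = c * S * w x"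
proof -
  have "(\<Sum>y<k. c * (if x = y then S else 0) * w y) = (\<Sum>y<k. if x = y then c*S*w y else 0)"
    by (intro sum.cong) auto
  also have "\<dots> = c*S*w x + (\<Sum>y\<in>{..<k}-{x}. if x = y then c*S*w y else 0)"
    using assms by (subst sum.remove[of _ x]) auto
  also have "(\<Sum>y\<in>{..<k}-{x}. if x = y then c*S*w y else 0) = 0"
    by (rule sum.neutral) auto
  finally show ?thesis by simp
qed

lemma ampl_entry:
  assumes "i < r*k" "j < r*k"
  shows "ampliate r n k (gen_ch n k J g u) X $$ (i,j) =
    (if i mod k = j mod k then (\<Sum>l\<in>J. of_real (g (i mod k) l) * quad n (u l) (block_op n X (i div k) (j div k))) else 0)"
proof -
  have "k > 0" using assms by (cases k) auto
  then show ?thesis using assms unfolding ampliate_def gen_ch_def by simp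
qed

lemma swap3:
  fixes c w h :: "_ \<Rightarrow> complex"
  shows "(\<Sum>a\<in>A. \<Sum>b\<in>B. c a * (\<Sum>l\<in>J. h l * Q l a b) * w b) = (\<Sum>l\<in>J. h l * (\<Sum>a\<in>A. \<Sum>b\<in>B. c a * Q l a b * w b))"
proof -
  have "(\<Sum>a\<in>A. \<Sum>b\<in>B. c a * (\<Sum>l\<in>J. h l * Q l a b) * w b) = (\<Sum>a\<in>A. \<Sum>b\<in>B. \<Sum>l\<in>J. h l * (c a * Q l a b * w b))"
    by (simp add: sum_distrib_left sum_distrib_right mult_ac)
  also have "\<dots> = (\<Sum>a\<in>A. \<Sum>l\<in>J. \<Sum>b\<in>B. h l * (c a * Q l a b * w b))"
    by (rule sum.cong[OF refl], rule sum.swap)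
  also have "\<dots> = (\<Sum>l\<in>J. \<Sum>a\<in>A. \<Sum>b\<in>B. h l * (c a * Q l a b * w b))"
    by (rule sum.swap)
  also have "\<dots> = (\<Sum>l\<in>J. h l * (\<Sum>a\<in>A. \<Sum>b\<in>B. c a * Q l a b * w b))"
    by (simp add: sum_distrib_left)
  finally show ?thesis .
qed

lemma gen_ch_cp:
  assumes g: "\<forall>x<k. \<forall>l\<in>J. 0 \<le> g x l" and X: "psd_op (r*n) X"
  shows "psd_op (r*k) (ampliate r n k (gen_ch n k J g u) X)"
proof -
  let ?Y = "ampliate r n k (gen_ch n k J g u) X"
  have XH: "hermitian_op (r*n) X" using X unfolding psd_op_def by blast
  have dm: "(a*k+x) div k = a" "(a*k+x) mod k = x" if "x < k" for a x
    using divmod_aux[OF that] by auto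
  have herm: "hermitian_op (r*k) ?Y"
    unfolding hermitian_op_def
  proof (intro conjI allI impI)
    show "?Y \<in> carrier_mat (r*k) (r*k)" unfolding ampliate_def by simp
  next
    fix i j assume ij: "i < r*k" "j < r*k"
    have kp: "k > 0" using ij by (cases k) auto
    have ab: "i div k < r" "j div k < r" using ij by (auto simp: less_mult_imp_div_less)
    show "?Y $$ (i,j) = cnj (?Y $$ (j,i))"
      unfolding ampl_entry[OF ij] ampl_entry[OF ij(2,1)]
      by (auto simp: cnj_sum quad_block_cnj[OF XH ab(1,2)])
  qed
  have "0 \<le> Re (\<Sum>i<r*k. \<Sum>j<r*k. cnj (v i) * ?Y $$ (i,j) * v j)" for v
  proof -
    have "(\<Sum>i<r*k. \<Sum>j<r*k. cnj (v i) * ?Y $$ (i,j) * v j)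
      = (\<Sum>a<r. \<Sum>x<k. \<Sum>b<r. \<Sum>y<k. cnj (v (a*k+x)) * ?Y $$ (a*k+x,b*k+y) * v (b*k+y))"
      unfolding sum_split ..
    also have "\<dots> = (\<Sum>a<r. \<Sum>x<k. \<Sum>b<r. \<Sum>y<k. cnj (v (a*k+x)) * (if x = y then
         (\<Sum>l\<in>J. of_real (g x l) * quad n (u l) (block_op n X a b)) else 0) * v (b*k+y))"
      by (intro sum.cong refl, subst ampl_entry) (auto simp: lt_aux dm)
    also have "\<dots> = (\<Sum>a<r. \<Sum>x<k. \<Sum>b<r. cnj (v (a*k+x)) *
         (\<Sum>l\<in>J. of_real (g x l) * quad n (u l) (block_op n X a b)) * v (b*k+x))"
      by (intro sum.cong refl) (simp add: sum_delta_aux)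
    also have "\<dots> = (\<Sum>x<k. \<Sum>a<r. \<Sum>b<r. cnj (v (a*k+x)) *
         (\<Sum>l\<in>J. of_real (g x l) * quad n (u l) (block_op n X a b)) * v (b*k+x))"
      by (rule sum.swap)
    also have "\<dots> = (\<Sum>x<k. \<Sum>l\<in>J. of_real (g x l) * (\<Sum>a<r. \<Sum>b<r. cnj (v (a*k+x)) *
         quad n (u l) (block_op n X a b) * v (b*k+x)))"
      by (intro sum.cong refl) (rule swap3)
    finally have eq: "(\<Sum>i<r*k. \<Sum>j<r*k. cnj (v i) * ?Y $$ (i,j) * v j) = \<dots>" .
    show ?thesis unfolding eq Re_sum
      using g psd_block_form[OF X] by (auto intro!: sum_nonneg)
  qed
  then show ?thesis using herm unfolding psd_op_def by blast
qed

lemma quad_add: "A \<in> carrier_mat n n \<Longrightarrow> B \<in> carrier_mat n n \<Longrightarrow> quad n v (A + B) = quad n v A + quad n v B"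
  unfolding quad_def by (simp add: sum.distrib[symmetric] distrib_left distrib_right)

lemma quad_smult: "A \<in> carrier_mat n n \<Longrightarrow> quad n v (c \<cdot>\<^sub>m A) = c * quad n v A"
  unfolding quad_def by (simp add: sum_distrib_left mult_ac)

lemma gen_ch_channel:
  assumes fin: "finite J" and g: "\<forall>x<k. \<forall>l\<in>J. 0 \<le> g x l"
   and id: "\<forall>a<n. \<forall>b<n. (\<Sum>l\<in>J. of_real (\<Sum>x<k. g x l) * cnj (u l a) * u l b) = (if a=b then 1 else 0)"
  shows "channel n k (gen_ch n k J g u)"
  unfolding channel_def
proof (intro conjI ballI allI impI)
  fix A :: "complex mat" assume A: "A \<in> carrier_mat n n"
  show "gen_ch n k J g u A \<in> carrier_mat k k" unfolding gen_ch_def by simp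
  fix B :: "complex mat" assume B: "B \<in> carrier_mat n n"
  show "gen_ch n k J g u (A + B) = gen_ch n k J g u A + gen_ch n k J g u B"
    by (rule eq_matI) (auto simp: gen_ch_def quad_add[OF A B] distrib_left sum.distrib)
next
  fix A :: "complex mat" and c assume A: "A \<in> carrier_mat n n"
  show "gen_ch n k J g u (c \<cdot>\<^sub>m A) = c \<cdot>\<^sub>m gen_ch n k J g u A"
    by (rule eq_matI) (auto simp: gen_ch_def quad_smult[OF A] sum_distrib_left mult_ac)
next
  fix A :: "complex mat" assume A: "A \<in> carrier_mat n n"
  have "trace_op (gen_ch n k J g u A) = (\<Sum>x<k. \<Sum>l\<in>J. of_real (g x l) * quad n (u l) A)"
    unfolding trace_op_def gen_ch_def by simp
  also have "\<dots> = (\<Sum>l\<in>J. of_real (\<Sum>x<k. g x l) * quad n (u l) A)"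
    by (subst sum.swap) (simp add: sum_distrib_right of_real_sum)
  also have "\<dots> = trace_op A"
    by (rule quad_sum_trace[OF A fin id])
  finally show "trace_op (gen_ch n k J g u A) = trace_op A" .
next
  fix r X assume "psd_op (r*n) X"
  then show "psd_op (r*k) (ampliate r n k (gen_ch n k J g u) X)"
    by (rule gen_ch_cp[OF g])
qed



lemma sum_single:
  assumes "finite A" "x \<in> A" "\<forall>y\<in>A. y \<noteq> x \<longrightarrow> f y = 0"
  shows "sum f A = f x"
proof -
  have "sum f A = f x + sum f (A - {x})" using assms by (subst sum.remove[of _ x]) auto
  also have "sum f (A - {x}) = 0" using assms by (intro sum.neutral) auto
  finally show ?thesis by simp
qed

lemma psd_diag:
  assumes "psd_op n A" "x < n"
  shows "Im (A $$ (x,x)) = 0" "0 \<le> Re (A $$ (x,x))"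
proof -
  have "A $$ (x,x) = cnj (A $$ (x,x))" using assms unfolding psd_op_def hermitian_op_def by blast
  then have "Im (A $$ (x,x)) = Im (cnj (A $$ (x,x)))" by (rule arg_cong)
  then show "Im (A $$ (x,x)) = 0" by simp
  define v :: "nat \<Rightarrow> complex" where "v i = (if i = x then 1 else 0)" for i
  have "(\<Sum>i<n. \<Sum>j<n. cnj (v i) * A $$ (i,j) * v j) = (\<Sum>j<n. cnj (v x) * A $$ (x,j) * v j)"
    using assms by (intro sum_single) (auto simp: v_def)
  also have "\<dots> = cnj (v x) * A $$ (x,x) * v x"
    using assms by (intro sum_single) (auto simp: v_def)
  finally have "(\<Sum>i<n. \<Sum>j<n. cnj (v i) * A $$ (i,j) * v j) = A $$ (x,x)" by (simp add: v_def)
  moreover have "0 \<le> Re (\<Sum>i<n. \<Sum>j<n. cnj (v i) * A $$ (i,j) * v j)"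
    using assms(1) unfolding psd_op_def by blast
  ultimately show "0 \<le> Re (A $$ (x,x))" by simp
qed

lemma trace_diag2:
  assumes "M \<in> carrier_mat 2 2"
  shows "trace_op (M * mat 2 2 (\<lambda>(x,y). if x = y then h x else 0)) = M $$ (0,0) * h 0 + M $$ (1,1) * h 1"
  using assms unfolding trace_op_def
  by (simp add: scalar_prod_def numeral_2_eq_2 lessThan_Suc atLeast0LessThan)

definition P0 :: "nat \<Rightarrow> complex mat" where
  "P0 z = mat 2 2 (\<lambda>(x,y). if x = y \<and> x = z then 1 else 0)"

lemma P0_psd: "z < 2 \<Longrightarrow> psd_op 2 (P0 z)"
  unfolding psd_op_def hermitian_op_def P0_def
  by (auto simp: numeral_2_eq_2 lessThan_Suc less_Suc_eq)

lemma opt_val: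
  fixes \<Lambda> :: "nat \<Rightarrow> complex mat \<Rightarrow> complex mat" and f :: "nat \<Rightarrow> nat \<Rightarrow> complex"
  assumes L: "\<And>i. i \<in> {0,1} \<Longrightarrow> \<Lambda> i \<omega> = mat 2 2 (\<lambda>(x,y). if x = y then f i x else 0)"
   and f: "0 \<le> Re (f 0 0)" "Re (f 0 0) + Re (f 0 1) = 1" "f 1 0 = 0" "Re (f 1 1) = 1"
  shows "opt_p_succ {0,1} (\<lambda>_. 1/2) \<Lambda> 2 \<omega> = (1 + Re (f 0 0)) / 2"
proof -
  have ps: "p_succ {0,1} (\<lambda>_. 1/2) \<Lambda> M \<omega> = 1/2 * (Re (M 0 $$ (0,0)) * Re (f 0 0) + Re (M 0 $$ (1,1)) * Re (f 0 1))
      + 1/2 * Re (M 1 $$ (1,1))"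
    if M: "\<forall>i\<in>{0::nat,1}. psd_op 2 (M i)" for M
  proof -
    have c: "M i \<in> carrier_mat 2 2" if "i \<in> {0,1}" for i
      using M that unfolding psd_op_def hermitian_op_def by blast
    have im: "Im (M i $$ (x,x)) = 0" if "i \<in> {0,1}" "x < 2" for i x
      using M that psd_diag(1) by blast
    show ?thesis unfolding p_succ_def
      using L c im[of 0 0] im[of 0 1] im[of 1 1] f
      by (simp add: trace_diag2)
  qed
  let ?S = "{p_succ {0,1} (\<lambda>_. 1/2) \<Lambda> M \<omega> | M. povm 2 {0,1} M}"
  show ?thesis unfolding opt_p_succ_def
  proof (rule cSup_eq_maximum)
    let ?M = "\<lambda>i. P0 i"
    have pv: "povm 2 {0,1} ?M"
      unfolding povm_def using P0_psd by (auto simp: P0_def)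
    moreover have "p_succ {0,1} (\<lambda>_. 1/2) \<Lambda> ?M \<omega> = (1 + Re (f 0 0)) / 2"
      using pv ps[of ?M] unfolding povm_def by (simp add: P0_def)
    ultimately show "(1 + Re (f 0 0)) / 2 \<in> ?S" by force
  next
    fix s assume "s \<in> ?S"
    then obtain M where pv: "povm 2 {0,1} M" and s: "s = p_succ {0,1} (\<lambda>_. 1/2) \<Lambda> M \<omega>" by blast
    have M: "\<forall>i\<in>{0::nat,1}. psd_op 2 (M i)" using pv unfolding povm_def by blast
    have sums: "M 0 $$ (0,0) + M 1 $$ (0,0) = 1" "M 0 $$ (1,1) + M 1 $$ (1,1) = 1"
      using pv unfolding povm_def by (auto dest!: spec[of _ 0] spec[of _ 1])
    have r: "Re (M 0 $$ (0,0)) + Re (M 1 $$ (0,0)) = 1" "Re (M 0 $$ (1,1)) + Re (M 1 $$ (1,1)) = 1"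
      using arg_cong[OF sums(1), of Re] arg_cong[OF sums(2), of Re] by auto
    have nn: "0 \<le> Re (M i $$ (x,x))" if "i \<in> {0,1}" "x < 2" for i x
      using M that psd_diag(2) by blast
    have key: "0 \<le> Re (f 0 0) * (1 - Re (M 0 $$ (0,0)) + Re (M 0 $$ (1,1)))"
      using f nn[of 1 0] nn[of 0 1] r by (intro mult_nonneg_nonneg) auto
    have e: "Re (f 0 1) * Re (M 0 $$ (1,1)) = Re (M 0 $$ (1,1)) - Re (f 0 0) * Re (M 0 $$ (1,1))"
      using f(2) by (simp add: algebra_simps flip: eq_diff_eq)
    have "1/2 * (Re (M 0 $$ (0,0)) * Re (f 0 0) + Re (f 0 1) * Re (M 0 $$ (1,1)))
      + 1/2 * Re (M 1 $$ (1,1)) \<le> (1 + Re (f 0 0)) / 2"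
      unfolding e using key r by (simp add: algebra_simps)
    then show "s \<le> (1 + Re (f 0 0)) / 2"
      unfolding s ps[OF M] by (simp add: mult.commute)
  qed
qed



definition zeta :: "nat \<Rightarrow> complex" where
  "zeta k = (if k = 0 then 1 else if k = 1 then -1 else if k = 2 then \<i> else -\<i>)"

definition wv :: "nat \<times> nat \<times> nat \<Rightarrow> nat \<Rightarrow> complex" where
  "wv l a = (case l of (i,j,k) \<Rightarrow> (if a = i then 1 else 0) + zeta k * (if a = j then 1 else 0))"

definition Lset :: "nat \<Rightarrow> (nat \<times> nat \<times> nat) set" where
  "Lset d = {..<d} \<times> {..<d} \<times> {..<4}"

definition cw :: "nat \<Rightarrow> real" where "cw d = 1 / (8 * real d)"

definition vk :: "nat \<Rightarrow> (nat \<Rightarrow> complex) \<Rightarrow> (nat \<Rightarrow> complex) \<Rightarrow> nat \<Rightarrow> complex" where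
  "vk d w w' s = w (s div d) * w' (s mod d)"

lemma sum_prod3: "sum f (A \<times> B \<times> C) = (\<Sum>a\<in>A. \<Sum>b\<in>B. \<Sum>c\<in>C. f (a,b,c))"
proof -
  have "(\<Sum>a\<in>A. \<Sum>b\<in>B. \<Sum>c\<in>C. f (a,b,c)) = (\<Sum>a\<in>A. \<Sum>bc\<in>B\<times>C. f (a,bc))"
    by (simp add: sum.cartesian_product split_def)
  also have "\<dots> = sum f (A \<times> B \<times> C)"
    by (simp add: sum.cartesian_product split_def)
  finally show ?thesis by simp
qed

lemma sum_prod2: "sum f (A \<times> B) = (\<Sum>a\<in>A. \<Sum>b\<in>B. f (a,b))"
  by (simp add: sum.cartesian_product split_def)

lemma fin_Lset[simp]: "finite (Lset d)" unfolding Lset_def by simp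

lemma lin_sum_r:
  fixes F :: "nat \<Rightarrow> complex"
  assumes "i < d" "j < d"
  shows "(\<Sum>b<d. F b * ((if b = i then 1 else 0) + c * (if b = j then 1 else 0))) = F i + c * F j"
proof -
  have "(\<Sum>b<d. F b * ((if b = i then 1 else 0) + c * (if b = j then 1 else 0)))
    = (\<Sum>b<d. (if b = i then F b else 0) + (if b = j then c * F b else 0))"
    by (intro sum.cong refl) (auto simp: algebra_simps)
  also have "\<dots> = (\<Sum>b<d. (if b = i then F b else 0)) + (\<Sum>b<d. (if b = j then c * F b else 0))"
    by (rule sum.distrib)
  finally show ?thesis using assms by simp
qed

lemma lin_sum_l:
  fixes F :: "nat \<Rightarrow> complex"
  assumes "i < d" "j < d"
  shows "(\<Sum>b<d. ((if b = i then 1 else 0) + c * (if b = j then 1 else 0)) * F b) = F i + c * F j"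
  using lin_sum_r[OF assms, of F c] by (simp add: mult.commute)

lemma quad_wv:
  assumes "i < d" "j < d"
  shows "quad d (wv (i,j,k)) \<omega> = \<omega> $$ (i,i) + zeta k * \<omega> $$ (i,j) + cnj (zeta k) * \<omega> $$ (j,i)
     + cnj (zeta k) * zeta k * \<omega> $$ (j,j)"
proof -
  have cw: "cnj (wv (i,j,k) a) = (if a = i then 1 else 0) + cnj (zeta k) * (if a = j then 1 else 0)" for a
    unfolding wv_def by simp
  have "quad d (wv (i,j,k)) \<omega> = (\<Sum>a<d. cnj (wv (i,j,k) a) * (\<Sum>b<d. \<omega> $$ (a,b) * wv (i,j,k) b))"
    unfolding quad_def by (simp add: sum_distrib_left mult_ac)
  also have "\<dots> = (\<Sum>a<d. cnj (wv (i,j,k) a) * (\<omega> $$ (a,i) + zeta k * \<omega> $$ (a,j)))"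
    unfolding wv_def using lin_sum_r[OF assms] by simp
  also have "\<dots> = (\<omega> $$ (i,i) + zeta k * \<omega> $$ (i,j)) + cnj (zeta k) * (\<omega> $$ (j,i) + zeta k * \<omega> $$ (j,j))"
    unfolding cw using lin_sum_l[OF assms] by simp
  finally show ?thesis by (simp add: algebra_simps)
qed

lemma entry_recover:
  assumes "i < d" "j < d"
  shows "\<omega> $$ (i,j) = 1/2 * ((quad d (wv (i,j,0)) \<omega> - (quad d (wv (i,i,0)) \<omega> / 4 + quad d (wv (j,j,0)) \<omega> / 4))
      - \<i> * (quad d (wv (i,j,2)) \<omega> - (quad d (wv (i,i,0)) \<omega> / 4 + quad d (wv (j,j,0)) \<omega> / 4)))"
  using assms by (simp add: quad_wv zeta_def algebra_simps)

lemma quad_herm_real: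
  assumes "hermitian_op n A"
  shows "Im (quad n v A) = 0"
proof -
  have h: "cnj (A $$ (i,j)) = A $$ (j,i)" if "i < n" "j < n" for i j
  proof -
    have "A $$ (j,i) = cnj (A $$ (i,j))" using assms that unfolding hermitian_op_def by blast
    then show ?thesis by simp
  qed
  have "cnj (quad n v A) = (\<Sum>i<n. \<Sum>j<n. v i * A $$ (j,i) * cnj (v j))"
    unfolding quad_def cnj_sum by (intro sum.cong refl) (simp add: h)
  also have "\<dots> = (\<Sum>j<n. \<Sum>i<n. v i * A $$ (j,i) * cnj (v j))" by (rule sum.swap)
  also have "\<dots> = quad n v A" unfolding quad_def by (simp add: mult_ac)
  finally have "cnj (quad n v A) = quad n v A" .
  then have "Im (cnj (quad n v A)) = Im (quad n v A)" by (rule arg_cong)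
  then show ?thesis by simp
qed

lemma quad_kron:
  assumes "\<omega> \<in> carrier_mat d d" "\<omega>' \<in> carrier_mat d d"
  shows "quad (d*d) (vk d w w') (kron \<omega> \<omega>') = quad d w \<omega> * quad d w' \<omega>'"
proof -
  have e: "kron \<omega> \<omega>' $$ (a*d+p, b*d+q) = \<omega> $$ (a,b) * \<omega>' $$ (p,q)"
    if "a<d" "p<d" "b<d" "q<d" for a p b q
    using assms that lt_aux[of p d a d] lt_aux[of q d b d] divmod_aux[of p d a] divmod_aux[of q d b]
    unfolding kron_def by simp
  have "quad (d*d) (vk d w w') (kron \<omega> \<omega>') =
     (\<Sum>a<d. \<Sum>p<d. \<Sum>b<d. \<Sum>q<d. cnj (w a * w' p) * (\<omega> $$ (a,b) * \<omega>' $$ (p,q)) * (w b * w' q))"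
    unfolding quad_def sum_split vk_def by (intro sum.cong refl) (simp add: divmod_aux e)
  also have "\<dots> = quad d w \<omega> * quad d w' \<omega>'"
    unfolding quad_def by (simp add: sum_product mult_ac)
  finally show ?thesis .
qed

lemma kron_one: "kron A (1\<^sub>m 1) = A"
  by (rule eq_matI) (auto simp: kron_def)

lemma tensor_pow2: "tensor_pow 2 A = kron A A"
  by (simp add: numeral_2_eq_2 kron_one[unfolded One_nat_def])

lemma wv_id:
  assumes "a < d" "b < d"
  shows "(\<Sum>l\<in>Lset d. of_real (cw d) * cnj (wv l a) * wv l b) = (if a = b then 1 else 0)"
proof -
  have dp: "real d > 0" using assms by simp
  have z: "(\<Sum>k<4. zeta k) = 0" "(\<Sum>k<4. cnj (zeta k)) = 0" "(\<Sum>k<4. cnj (zeta k) * zeta k) = 4"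
    by (simp_all add: zeta_def eval_nat_numeral lessThan_Suc)
  define X where "X i = (if a = i then 1 else 0) * (if b = i then 1 else (0::complex))" for i
  have h1: "(\<Sum>i<d. X i) = (if a = b then 1 else 0)"
  proof -
    have "(\<Sum>i<d. X i) = (\<Sum>i<d. if a = i then (if a = b then 1 else 0) else 0)"
      unfolding X_def by (intro sum.cong refl) auto
    then show ?thesis using assms by simp
  qed
  have "(\<Sum>l\<in>Lset d. cnj (wv l a) * wv l b) = (\<Sum>i<d. \<Sum>j<d. \<Sum>k<4.
      (if a = i then 1 else 0) * (if b = i then 1 else 0)
      + zeta k * ((if a = i then 1 else 0) * (if b = j then 1 else 0))
      + cnj (zeta k) * ((if a = j then 1 else 0) * (if b = i then 1 else 0))
      + cnj (zeta k) * zeta k * ((if a = j then 1 else 0) * (if b = j then 1 else 0)))"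
    unfolding Lset_def sum_prod3 wv_def
    by (intro sum.cong refl) (auto simp: algebra_simps)
  also have "\<dots> = (\<Sum>i<d. \<Sum>j<d. 4 * ((if a = i then 1 else 0) * (if b = i then 1 else 0))
      + 4 * ((if a = j then 1 else 0) * (if b = j then 1 else 0)))"
    by (simp add: sum.distrib sum_distrib_right[symmetric] z)
  also have "\<dots> = (\<Sum>i<d. \<Sum>j<d. 4 * X i) + (\<Sum>i<d. \<Sum>j<d. 4 * X j)"
    unfolding X_def by (simp add: sum.distrib)
  also have "\<dots> = of_nat d * (4 * (\<Sum>i<d. X i)) + of_nat d * (4 * (\<Sum>j<d. X j))"
    by (simp add: sum_distrib_left[symmetric])
  also have "\<dots> = of_nat (8*d) * (if a = b then 1 else 0)"
    unfolding h1 by simp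
  finally have "(\<Sum>l\<in>Lset d. cnj (wv l a) * wv l b) = of_nat (8*d) * (if a = b then 1 else 0)" .
  moreover have "(\<Sum>l\<in>Lset d. of_real (cw d) * cnj (wv l a) * wv l b) = of_real (cw d) * (\<Sum>l\<in>Lset d. cnj (wv l a) * wv l b)"
    by (simp add: sum_distrib_left mult.assoc)
  ultimately show ?thesis using dp unfolding cw_def by simp
qed



lemma quad_ident:
  fixes q a :: "'l \<Rightarrow> real"
  assumes fin: "finite L" and q: "sum q L = 1" and a: "sum a L = 1"
  shows "(\<Sum>J\<in>L\<times>L. (1/2 - 1/8 * ((if fst J = snd J then 1 else 0) - a (fst J) - a (snd J) + (\<Sum>m\<in>L. (a m)\<^sup>2))) * q (fst J) * q (snd J))
     = 1/2 - 1/8 * (\<Sum>l\<in>L. (q l - a l)\<^sup>2)"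
proof -
  define A where "A = (\<Sum>m\<in>L. (a m)\<^sup>2)"
  define B where "B = (\<Sum>m\<in>L. a m * q m)"
  define Q where "Q = (\<Sum>m\<in>L. q m * q m)"
  have t: "(1/2 - 1/8 * ((if l = l' then 1 else 0) - a l - a l' + A)) * q l * q l'
     = ((1/2 - A/8) * q l + 1/8 * (a l * q l)) * q l' + (1/8 * q l) * (a l' * q l') - 1/8 * (if l' = l then q l * q l' else 0)" for l l'
    by (auto simp: algebra_simps)
  have inner: "(\<Sum>l'\<in>L. (1/2 - 1/8 * ((if l = l' then 1 else 0) - a l - a l' + A)) * q l * q l')
      = ((1/2 - A/8) * q l + 1/8 * (a l * q l)) + (1/8 * q l) * B - 1/8 * (q l * q l)" if "l \<in> L" for l
  proof -
    have "(\<Sum>l'\<in>L. (1/2 - 1/8 * ((if l = l' then 1 else 0) - a l - a l' + A)) * q l * q l')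
      = (\<Sum>l'\<in>L. ((1/2 - A/8) * q l + 1/8 * (a l * q l)) * q l') + (\<Sum>l'\<in>L. (1/8 * q l) * (a l' * q l'))
        - (\<Sum>l'\<in>L. 1/8 * (if l' = l then q l * q l' else 0))"
      unfolding t by (simp add: sum.distrib sum_subtractf)
    also have "\<dots> = ((1/2 - A/8) * q l + 1/8 * (a l * q l)) * (\<Sum>l'\<in>L. q l') + (1/8 * q l) * B
        - 1/8 * (\<Sum>l'\<in>L. (if l' = l then q l * q l' else 0))"
      unfolding B_def by (simp only: sum_distrib_left)
    also have "\<dots> = ((1/2 - A/8) * q l + 1/8 * (a l * q l)) + (1/8 * q l) * B - 1/8 * (q l * q l)"
      using fin that q by simp
    finally show ?thesis .
  qed
  have "(\<Sum>J\<in>L\<times>L. (1/2 - 1/8 * ((if fst J = snd J then 1 else 0) - a (fst J) - a (snd J) + A)) * q (fst J) * q (snd J))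
    = (\<Sum>l\<in>L. ((1/2 - A/8) * q l + 1/8 * (a l * q l)) + (1/8 * q l) * B - 1/8 * (q l * q l))"
    unfolding sum_prod2 using inner by (intro sum.cong refl) simp
  also have "\<dots> = (1/2 - A/8) * (\<Sum>l\<in>L. q l) + 1/8 * B + 1/8 * (\<Sum>l\<in>L. q l) * B - 1/8 * Q"
    unfolding Q_def by (simp add: sum.distrib sum_subtractf sum_distrib_left[symmetric] sum_distrib_right[symmetric] sum_divide_distrib[symmetric] B_def[symmetric])
  also have "\<dots> = 1/2 - 1/8 * (Q - 2 * B + A)"
    using q by (simp add: algebra_simps)
  also have "Q - 2 * B + A = (\<Sum>l\<in>L. (q l - a l)\<^sup>2)"
  proof -
    have "(\<Sum>l\<in>L. (q l - a l)\<^sup>2) = (\<Sum>l\<in>L. q l * q l - 2 * (a l * q l) + (a l)\<^sup>2)"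
      by (intro sum.cong refl) (simp add: power2_eq_square algebra_simps)
    also have "\<dots> = Q - 2 * B + A"
      unfolding Q_def B_def A_def by (simp add: sum.distrib sum_subtractf sum_distrib_left[symmetric])
    finally show ?thesis by simp
  qed
  finally show ?thesis unfolding A_def .
qed

definition Qr :: "nat \<Rightarrow> complex mat \<Rightarrow> nat \<times> nat \<times> nat \<Rightarrow> real" where
  "Qr d \<omega> l = cw d * Re (quad d (wv l) \<omega>)"

definition UU :: "nat \<Rightarrow> (nat \<times> nat \<times> nat) \<times> (nat \<times> nat \<times> nat) \<Rightarrow> nat \<Rightarrow> complex" where
  "UU d J = vk d (wv (fst J)) (wv (snd J))"

definition Tau :: "nat \<Rightarrow> complex mat \<Rightarrow> (nat \<times> nat \<times> nat) \<times> (nat \<times> nat \<times> nat) \<Rightarrow> real" where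
  "Tau d \<rho> J = 1/2 - 1/8 * ((if fst J = snd J then 1 else 0) - Qr d \<rho> (fst J) - Qr d \<rho> (snd J)
      + (\<Sum>m\<in>Lset d. (Qr d \<rho> m)\<^sup>2))"

definition Lam0 :: "nat \<Rightarrow> complex mat \<Rightarrow> complex mat \<Rightarrow> complex mat" where
  "Lam0 d \<rho> = gen_ch (d*d) 2 (Lset d \<times> Lset d)
     (\<lambda>x J. if x = 0 then Tau d \<rho> J * (cw d)\<^sup>2 else (1 - Tau d \<rho> J) * (cw d)\<^sup>2) (UU d)"

definition Lam1 :: "nat \<Rightarrow> complex mat \<Rightarrow> complex mat" where
  "Lam1 d = gen_ch (d*d) 2 (Lset d \<times> Lset d) (\<lambda>x J. if x = 1 then (cw d)\<^sup>2 else 0) (UU d)"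

definition Lamo :: "nat \<Rightarrow> complex mat \<Rightarrow> complex mat" where
  "Lamo n = gen_ch n 2 {..<n} (\<lambda>x p. if x = 1 then 1 else 0) (\<lambda>p a. if a = p then 1 else 0)"

definition LamF :: "nat \<Rightarrow> complex mat \<Rightarrow> nat \<Rightarrow> nat \<Rightarrow> complex mat \<Rightarrow> complex mat" where
  "LamF d \<rho> m i = (if m = 2 then (if i = 0 then Lam0 d \<rho> else Lam1 d) else Lamo (d^m))"

lemma U_id:
  assumes "d > 0" "a < d*d" "b < d*d"
  shows "(\<Sum>J\<in>Lset d \<times> Lset d. of_real ((cw d)\<^sup>2) * cnj (UU d J a) * UU d J b) = (if a = b then 1 else 0)"
proof -
  have ad: "a div d < d" "b div d < d" "a mod d < d" "b mod d < d"
    using assms by (auto simp: less_mult_imp_div_less)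
  have "(\<Sum>J\<in>Lset d \<times> Lset d. of_real ((cw d)\<^sup>2) * cnj (UU d J a) * UU d J b)
     = (\<Sum>l\<in>Lset d. \<Sum>l'\<in>Lset d. (of_real (cw d) * cnj (wv l (a div d)) * wv l (b div d))
          * (of_real (cw d) * cnj (wv l' (a mod d)) * wv l' (b mod d)))"
    unfolding sum_prod2 UU_def vk_def by (intro sum.cong refl) (simp add: power2_eq_square mult_ac)
  also have "\<dots> = (\<Sum>l\<in>Lset d. of_real (cw d) * cnj (wv l (a div d)) * wv l (b div d))
          * (\<Sum>l'\<in>Lset d. of_real (cw d) * cnj (wv l' (a mod d)) * wv l' (b mod d))"
    by (simp add: sum_product)
  also have "\<dots> = (if a div d = b div d then 1 else 0) * (if a mod d = b mod d then 1 else 0)"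
    using wv_id ad by simp
  also have "\<dots> = (if a = b then 1 else 0)"
  proof -
    have "a div d = b div d \<Longrightarrow> a mod d = b mod d \<Longrightarrow> a = b" by (metis div_mult_mod_eq)
    then show ?thesis by auto
  qed
  finally show ?thesis .
qed

lemma dens_carrier: "\<rho> \<in> density_ops d \<Longrightarrow> \<rho> \<in> carrier_mat d d"
  unfolding density_ops_def psd_op_def hermitian_op_def by blast

lemma dens_herm: "\<rho> \<in> density_ops d \<Longrightarrow> hermitian_op d \<rho>"
  unfolding density_ops_def psd_op_def by blast

lemma quad_psd: "\<rho> \<in> density_ops d \<Longrightarrow> 0 \<le> Re (quad d v \<rho>)"
  unfolding density_ops_def psd_op_def quad_def by blast

lemma Qr_props:
  assumes "\<rho> \<in> density_ops d" "d > 0"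
  shows "\<forall>l. 0 \<le> Qr d \<rho> l" "sum (Qr d \<rho>) (Lset d) = 1"
proof -
  show "\<forall>l. 0 \<le> Qr d \<rho> l" unfolding Qr_def cw_def using quad_psd[OF assms(1)] by simp
  have "(\<Sum>l\<in>Lset d. of_real (cw d) * quad d (wv l) \<rho>) = trace_op \<rho>"
    by (rule quad_sum_trace[OF dens_carrier[OF assms(1)] fin_Lset]) (simp add: wv_id)
  then have "Re (\<Sum>l\<in>Lset d. of_real (cw d) * quad d (wv l) \<rho>) = 1"
    using assms(1) unfolding density_ops_def by simp
  then show "sum (Qr d \<rho>) (Lset d) = 1" unfolding Qr_def Re_sum by simp
qed

lemma tau_bound: "0 \<le> x \<Longrightarrow> x \<le> 1 \<Longrightarrow> 0 \<le> y \<Longrightarrow> y \<le> 1 \<Longrightarrow> 0 \<le> A \<Longrightarrow> A \<le> 1 \<Longrightarrow> 0 \<le> e \<Longrightarrow> e \<le> 1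
  \<Longrightarrow> 0 \<le> 1/2 - 1/8 * (e - x - y + A) \<and> 1/2 - 1/8 * (e - x - y + A) \<le> (1::real)"
  by (intro conjI; simp add: field_simps)

lemma Tau_range:
  assumes "\<rho> \<in> density_ops d" "d > 0" "J \<in> Lset d \<times> Lset d"
  shows "0 \<le> Tau d \<rho> J \<and> Tau d \<rho> J \<le> 1"
proof -
  note Q = Qr_props[OF assms(1,2)]
  have le1: "Qr d \<rho> l \<le> 1" if "l \<in> Lset d" for l
    using Q that member_le_sum[of l "Lset d" "Qr d \<rho>"] by auto
  have sq: "(Qr d \<rho> l)\<^sup>2 \<le> Qr d \<rho> l" if "l \<in> Lset d" for l
  proof -
    have q0: "0 \<le> Qr d \<rho> l" using Q(1) by blast
    show ?thesis using mult_left_le[OF le1[OF that] q0] by (simp add: power2_eq_square)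
  qed
  have A1: "(\<Sum>m\<in>Lset d. (Qr d \<rho> m)\<^sup>2) \<le> 1"
    using sum_mono[of "Lset d" "\<lambda>m. (Qr d \<rho> m)\<^sup>2" "Qr d \<rho>"] sq Q by auto
  have A0: "0 \<le> (\<Sum>m\<in>Lset d. (Qr d \<rho> m)\<^sup>2)" by (simp add: sum_nonneg)
  have n0: "0 \<le> Qr d \<rho> (fst J)" "0 \<le> Qr d \<rho> (snd J)" using Q(1) by blast+
  have J: "fst J \<in> Lset d" "snd J \<in> Lset d" using assms(3) by (auto simp: mem_Times_iff)
  show ?thesis unfolding Tau_def
    by (rule tau_bound) (use le1[OF J(1)] le1[OF J(2)] n0 A0 A1 in auto)
qed


lemma ch_Lam0:
  assumes "\<rho> \<in> density_ops d" "d > 0"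
  shows "channel (d*d) 2 (Lam0 d \<rho>)"
proof -
  have s: "(\<Sum>x::nat<2. (if x = 0 then Tau d \<rho> J * (cw d)\<^sup>2 else (1 - Tau d \<rho> J) * (cw d)\<^sup>2)) = (cw d)\<^sup>2" for J
    by (simp add: eval_nat_numeral lessThan_Suc algebra_simps)
  show ?thesis unfolding Lam0_def
  proof (rule gen_ch_channel)
    show "finite (Lset d \<times> Lset d)" by simp
    show "\<forall>x<2. \<forall>l\<in>Lset d \<times> Lset d. 0 \<le> (if x = 0 then Tau d \<rho> l * (cw d)\<^sup>2 else (1 - Tau d \<rho> l) * (cw d)\<^sup>2)"
      using Tau_range[OF assms] by auto
    show "\<forall>a<d*d. \<forall>b<d*d. (\<Sum>l\<in>Lset d \<times> Lset d. of_real (\<Sum>x::nat<2. (if x = 0 then Tau d \<rho> l * (cw d)\<^sup>2 else (1 - Tau d \<rho> l) * (cw d)\<^sup>2)) * cnj (UU d l a) * UU d l b) = (if a = b then 1 else 0)"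
      unfolding s using U_id[OF assms(2)] by blast
  qed
qed

lemma ch_Lam1:
  assumes "d > 0"
  shows "channel (d*d) 2 (Lam1 d)"
proof -
  have s: "(\<Sum>x::nat<2. (if x = 1 then (cw d)\<^sup>2 else 0)) = (cw d)\<^sup>2"
    by (simp add: eval_nat_numeral lessThan_Suc)
  show ?thesis unfolding Lam1_def
  proof (rule gen_ch_channel)
    show "finite (Lset d \<times> Lset d)" by simp
    show "\<forall>x<2. \<forall>l\<in>Lset d \<times> Lset d. 0 \<le> (if x = 1 then (cw d)\<^sup>2 else 0)" by auto
    show "\<forall>a<d*d. \<forall>b<d*d. (\<Sum>l\<in>Lset d \<times> Lset d. of_real (\<Sum>x::nat<2. (if x = 1 then (cw d)\<^sup>2 else 0)) * cnj (UU d l a) * UU d l b) = (if a = b then 1 else 0)"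
      unfolding s using U_id[OF assms] by blast
  qed
qed

lemma ch_Lamo: "channel n 2 (Lamo n)"
proof -
  have s: "(\<Sum>x::nat<2. (if x = 1 then 1 else 0)) = (1::real)"
    by (simp add: eval_nat_numeral lessThan_Suc)
  show ?thesis unfolding Lamo_def
  proof (rule gen_ch_channel)
    show "finite {..<n}" by simp
    show "\<forall>x<2. \<forall>l\<in>{..<n}. 0 \<le> (if x = 1 then 1 else (0::real))" by auto
    show "\<forall>a<n. \<forall>b<n. (\<Sum>l<n. of_real (\<Sum>x::nat<2. (if x = 1 then 1 else (0::real))) * cnj (if a = l then 1 else 0) * (if b = l then 1 else 0)) = (if a = b then 1 else (0::complex))"
    proof (intro allI impI)
      fix a b assume ab: "a < n" "b < n"
      have "(\<Sum>l<n. of_real (\<Sum>x::nat<2. (if x = 1 then 1 else (0::real))) * cnj (if a = l then 1 else 0) * (if b = l then 1 else 0))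
        = (\<Sum>l<n. if a = l then (if a = b then 1 else (0::complex)) else 0)"
        unfolding s by (intro sum.cong refl) auto
      then show "(\<Sum>l<n. of_real (\<Sum>x::nat<2. (if x = 1 then 1 else (0::real))) * cnj (if a = l then 1 else 0) * (if b = l then 1 else 0)) = (if a = b then 1 else (0::complex))"
        using ab by simp
    qed
  qed
qed

lemma re_sum_h:
  assumes "\<omega> \<in> density_ops d"
  shows "Re (\<Sum>J\<in>Lset d \<times> Lset d. of_real (h J * (cw d)\<^sup>2) * quad (d*d) (UU d J) (kron \<omega> \<omega>))
     = (\<Sum>J\<in>Lset d \<times> Lset d. h J * Qr d \<omega> (fst J) * Qr d \<omega> (snd J))"
  unfolding Re_sum
proof (rule sum.cong[OF refl])
  fix J
  have c: "\<omega> \<in> carrier_mat d d" using dens_carrier[OF assms] .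
  have i1: "Im (quad d (wv (fst J)) \<omega>) = 0" "Im (quad d (wv (snd J)) \<omega>) = 0"
    using quad_herm_real[OF dens_herm[OF assms]] by auto
  show "Re (of_real (h J * (cw d)\<^sup>2) * quad (d*d) (UU d J) (kron \<omega> \<omega>)) = h J * Qr d \<omega> (fst J) * Qr d \<omega> (snd J)"
    unfolding UU_def quad_kron[OF c c] Qr_def using i1 by (simp add: power2_eq_square mult_ac)
qed

lemma sumQQ:
  assumes "\<omega> \<in> density_ops d" "d > 0"
  shows "(\<Sum>J\<in>Lset d \<times> Lset d. Qr d \<omega> (fst J) * Qr d \<omega> (snd J)) = 1"
proof -
  have "(\<Sum>J\<in>Lset d \<times> Lset d. Qr d \<omega> (fst J) * Qr d \<omega> (snd J)) = sum (Qr d \<omega>) (Lset d) * sum (Qr d \<omega>) (Lset d)"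
    unfolding sum_prod2 sum_product by simp
  then show ?thesis using Qr_props(2)[OF assms] by simp
qed

lemma opt_formula:
  assumes r: "\<rho> \<in> density_ops d" and s: "\<sigma> \<in> density_ops d" and d: "d > 0"
  shows "opt_p_succ {0,1} (\<lambda>_. 1/2) (LamF d \<rho> 2) 2 (tensor_pow 2 \<sigma>)
      = (1 + (\<Sum>J\<in>Lset d \<times> Lset d. Tau d \<rho> J * Qr d \<sigma> (fst J) * Qr d \<sigma> (snd J))) / 2
    \<and> 0 \<le> (\<Sum>J\<in>Lset d \<times> Lset d. Tau d \<rho> J * Qr d \<sigma> (fst J) * Qr d \<sigma> (snd J))"
proof -
  let ?K = "kron \<sigma> \<sigma>"
  define f where "f i x = (if i = 0 then
      (\<Sum>J\<in>Lset d \<times> Lset d. of_real (if x = 0 then Tau d \<rho> J * (cw d)\<^sup>2 else (1 - Tau d \<rho> J) * (cw d)\<^sup>2) * quad (d*d) (UU d J) ?K)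
    else (\<Sum>J\<in>Lset d \<times> Lset d. of_real (if x = 1 then (cw d)\<^sup>2 else 0) * quad (d*d) (UU d J) ?K))" for i x :: nat
  have L: "LamF d \<rho> 2 i (tensor_pow 2 \<sigma>) = mat 2 2 (\<lambda>(x,y). if x = y then f i x else 0)" if "i \<in> {0,1}" for i
  proof (cases "i = 0")
    case True
    have "f 0 x = (\<Sum>J\<in>Lset d \<times> Lset d. of_real (if x = 0 then Tau d \<rho> J * (cw d)\<^sup>2 else (1 - Tau d \<rho> J) * (cw d)\<^sup>2) * quad (d*d) (UU d J) ?K)" for x
      unfolding f_def by simp
    have "LamF d \<rho> 2 0 = Lam0 d \<rho>" by (simp add: LamF_def)
    then show ?thesis unfolding True tensor_pow2
      by (intro eq_matI) (simp_all add: Lam0_def gen_ch_def f_def)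
  next
    case False
    then have i1: "i = 1" using that by simp
    have "f 1 x = (\<Sum>J\<in>Lset d \<times> Lset d. of_real (if x = 1 then (cw d)\<^sup>2 else 0) * quad (d*d) (UU d J) ?K)" for x
      unfolding f_def by simp
    have "LamF d \<rho> 2 1 = Lam1 d" by (simp add: LamF_def)
    then show ?thesis unfolding i1 tensor_pow2
      by (intro eq_matI) (simp_all add: Lam1_def gen_ch_def f_def)
  qed
  have e00: "f 0 0 = (\<Sum>J\<in>Lset d \<times> Lset d. of_real (Tau d \<rho> J * (cw d)\<^sup>2) * quad (d*d) (UU d J) ?K)"
    unfolding f_def by simp
  have e01: "f 0 1 = (\<Sum>J\<in>Lset d \<times> Lset d. of_real ((1 - Tau d \<rho> J) * (cw d)\<^sup>2) * quad (d*d) (UU d J) ?K)"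
    unfolding f_def by simp
  have e11: "f 1 1 = (\<Sum>J\<in>Lset d \<times> Lset d. of_real ((\<lambda>J. 1) J * (cw d)\<^sup>2) * quad (d*d) (UU d J) ?K)"
    unfolding f_def by simp
  have f00: "Re (f 0 0) = (\<Sum>J\<in>Lset d \<times> Lset d. Tau d \<rho> J * Qr d \<sigma> (fst J) * Qr d \<sigma> (snd J))"
    unfolding e00 by (rule re_sum_h[OF s])
  have f01: "Re (f 0 1) = (\<Sum>J\<in>Lset d \<times> Lset d. (1 - Tau d \<rho> J) * Qr d \<sigma> (fst J) * Qr d \<sigma> (snd J))"
    unfolding e01 by (rule re_sum_h[OF s])
  have f11: "Re (f 1 1) = (\<Sum>J\<in>Lset d \<times> Lset d. (\<lambda>J. 1) J * Qr d \<sigma> (fst J) * Qr d \<sigma> (snd J))"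
    unfolding e11 by (rule re_sum_h[OF s])
  have f10: "f 1 0 = 0" unfolding f_def by simp
  have sum1: "Re (f 0 0) + Re (f 0 1) = 1"
    unfolding f00 f01 sum.distrib[symmetric] using sumQQ[OF s d] by (simp add: algebra_simps)
  have nn: "0 \<le> (\<Sum>J\<in>Lset d \<times> Lset d. Tau d \<rho> J * Qr d \<sigma> (fst J) * Qr d \<sigma> (snd J))"
    using Tau_range[OF r d] Qr_props(1)[OF s d] by (intro sum_nonneg) auto
  have "opt_p_succ {0,1} (\<lambda>_. 1/2) (LamF d \<rho> 2) 2 (tensor_pow 2 \<sigma>) = (1 + Re (f 0 0)) / 2"
    by (rule opt_val[where f=f]) (use L nn f00 sum1 f10 f11 sumQQ[OF s d] in auto)
  then show ?thesis using f00 nn by simp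
qed


lemma gap:
  assumes F: "F \<subseteq> density_ops d" and cl: "closed_ops d F" and r: "\<rho> \<in> density_ops d"
    and nF: "\<rho> \<notin> F" and d: "d > 0"
  shows "\<exists>\<delta>>0. \<forall>\<sigma>\<in>F. \<delta> \<le> (\<Sum>l\<in>Lset d. (Qr d \<sigma> l - Qr d \<rho> l)\<^sup>2)"
proof (rule ccontr)
  define D where "D \<sigma> = (\<Sum>l\<in>Lset d. (Qr d \<sigma> l - Qr d \<rho> l)\<^sup>2)" for \<sigma>
  assume na: "\<not> (\<exists>\<delta>>0. \<forall>\<sigma>\<in>F. \<delta> \<le> (\<Sum>l\<in>Lset d. (Qr d \<sigma> l - Qr d \<rho> l)\<^sup>2))"
  have ex: "\<exists>\<sigma>\<in>F. D \<sigma> < inverse (real (Suc n))" for n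
  proof (rule ccontr)
    assume "\<not> (\<exists>\<sigma>\<in>F. D \<sigma> < inverse (real (Suc n)))"
    then have h: "\<forall>\<sigma>\<in>F. inverse (real (Suc n)) \<le> D \<sigma>" by (simp add: not_less)
    have "\<exists>\<delta>>0. \<forall>\<sigma>\<in>F. \<delta> \<le> (\<Sum>l\<in>Lset d. (Qr d \<sigma> l - Qr d \<rho> l)\<^sup>2)"
      using h unfolding D_def by (intro exI[of _ "inverse (real (Suc n))"]) simp
    with na show False by (rule notE)
  qed
  have "\<forall>n. \<exists>\<sigma>. \<sigma> \<in> F \<and> D \<sigma> < inverse (real (Suc n))" using ex by blast
  from choice[OF this] obtain s where s0: "\<forall>n. s n \<in> F \<and> D (s n) < inverse (real (Suc n))" by blast
  have s: "\<And>n. s n \<in> F" "\<And>n. D (s n) < inverse (real (Suc n))" using s0 by auto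
  have sd: "s n \<in> density_ops d" for n using s(1) F by blast
  have Dnn: "0 \<le> D \<sigma>" for \<sigma> unfolding D_def by (intro sum_nonneg) auto
  have D0: "(\<lambda>n. D (s n)) \<longlonglongrightarrow> 0"
  proof (rule tendsto_sandwich[of "\<lambda>_. 0" _ _ "\<lambda>n. inverse (real (Suc n))"])
    show "\<forall>\<^sub>F n in sequentially. 0 \<le> D (s n)" using Dnn by simp
    show "\<forall>\<^sub>F n in sequentially. D (s n) \<le> inverse (real (Suc n))"
      by (intro always_eventually allI less_imp_le s(2))
    show "(\<lambda>_. 0::real) \<longlonglongrightarrow> 0" by simp
    show "(\<lambda>n. inverse (real (Suc n))) \<longlonglongrightarrow> 0" by (rule LIMSEQ_inverse_real_of_nat)
  qed
  have Qc: "(\<lambda>n. Qr d (s n) l) \<longlonglongrightarrow> Qr d \<rho> l" if l: "l \<in> Lset d" for l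
  proof -
    have b: "norm (Qr d (s n) l - Qr d \<rho> l) \<le> sqrt (D (s n))" for n
    proof -
      have "(Qr d (s n) l - Qr d \<rho> l)\<^sup>2 \<le> D (s n)" unfolding D_def
        by (rule member_le_sum[OF l]) auto
      then have "sqrt ((Qr d (s n) l - Qr d \<rho> l)\<^sup>2) \<le> sqrt (D (s n))" by (rule real_sqrt_le_mono)
      then show ?thesis by simp
    qed
    have "(\<lambda>n. sqrt (D (s n))) \<longlonglongrightarrow> 0" using tendsto_real_sqrt[OF D0] by simp
    then have "(\<lambda>n. Qr d (s n) l - Qr d \<rho> l) \<longlonglongrightarrow> 0"
      by (rule Lim_null_comparison[OF always_eventually[OF allI[OF b]]])
    then show ?thesis by (rule LIM_zero_cancel)
  qed
  have cwp: "cw d > 0" unfolding cw_def using d by simp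
  have rq: "quad d (wv l) \<omega> = of_real (Qr d \<omega> l / cw d)" if "\<omega> \<in> density_ops d" for \<omega> l
  proof -
    have im: "Im (quad d (wv l) \<omega>) = 0" using quad_herm_real[OF dens_herm[OF that]] .
    have e: "Qr d \<omega> l / cw d = Re (quad d (wv l) \<omega>)" unfolding Qr_def using cwp by simp
    show ?thesis unfolding e using im by (intro complex_eqI) simp_all
  qed
  have qc: "(\<lambda>n. quad d (wv l) (s n)) \<longlonglongrightarrow> quad d (wv l) \<rho>" if "l \<in> Lset d" for l
    unfolding rq[OF sd] rq[OF r] using cwp
    by (intro tendsto_of_real tendsto_divide Qc[OF that] tendsto_const) auto
  have ent: "(\<lambda>n. s n $$ (i,j)) \<longlonglongrightarrow> \<rho> $$ (i,j)" if ij: "i < d" "j < d" for i j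
  proof -
    have mem: "(i,j,0) \<in> Lset d" "(i,i,0) \<in> Lset d" "(j,j,0) \<in> Lset d" "(i,j,2) \<in> Lset d"
      using ij by (auto simp: Lset_def)
    let ?E = "\<lambda>\<omega>. 1/2 * ((quad d (wv (i,j,0)) \<omega> - (quad d (wv (i,i,0)) \<omega> / 4 + quad d (wv (j,j,0)) \<omega> / 4))
      - \<i> * (quad d (wv (i,j,2)) \<omega> - (quad d (wv (i,i,0)) \<omega> / 4 + quad d (wv (j,j,0)) \<omega> / 4)))"
    have l: "(\<lambda>n. ?E (s n)) \<longlonglongrightarrow> ?E \<rho>"
      by (intro tendsto_intros qc mem) simp_all
    have e1: "(\<lambda>n. s n $$ (i,j)) = (\<lambda>n. ?E (s n))"
      by (rule ext) (rule entry_recover[OF ij])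
    have e2: "\<rho> $$ (i,j) = ?E \<rho>" by (rule entry_recover[OF ij])
    show ?thesis unfolding e1 e2 by (rule l)
  qed
  have "\<rho> \<in> F"
    using cl s(1) dens_carrier[OF r] ent unfolding closed_ops_def by blast
  with nF show False by blast
qed


lemma ratio_bound:
  fixes D \<delta> :: real
  assumes "0 < \<delta>" "\<delta> \<le> 1" "\<delta> \<le> D" "0 \<le> 1/2 - 1/8 * D"
  shows "(3/2) / (3/2 - \<delta>/8) \<le> ((1 + (1/2 - 1/8 * 0)) / 2) / ((1 + (1/2 - 1/8 * D)) / 2)"
proof -
  have "((1 + (1/2 - 1/8 * 0)) / 2) / ((1 + (1/2 - 1/8 * D)) / 2) = (3/2) / (3/2 - D/8)"
    by (simp add: field_simps)
  also have "(3/2) / (3/2 - \<delta>/8) \<le> (3/2) / (3/2 - D/8)"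
    using assms by (intro divide_left_mono) (auto intro!: mult_pos_pos)
  finally show ?thesis by simp
qed

theorem theorem6:
  fixes d :: nat and F :: "complex mat set" and \<rho> :: "complex mat"
  assumes "2 \<le> d"
    and "F \<subseteq> density_ops d"
    and "closed_ops d F"
    and "\<rho> \<in> density_ops d"
    and "\<rho> \<notin> F"
  shows "\<exists>(I :: nat set) (p :: nat \<Rightarrow> real) (k :: nat \<Rightarrow> nat)
            (\<Lambda> :: nat \<Rightarrow> nat \<Rightarrow> complex mat \<Rightarrow> complex mat).
           prob_dist I p \<and>
           (\<forall>m\<in>{2..d}. \<forall>i\<in>I. channel (d ^ m) (k m) (\<Lambda> m i)) \<and>
           (\<exists>c > 1. \<forall>\<sigma>\<in>F.
              c \<le> Max ((\<lambda>m. opt_p_succ I p (\<Lambda> m) (k m) (tensor_pow m \<rho>)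
                          / opt_p_succ I p (\<Lambda> m) (k m) (tensor_pow m \<sigma>)) ` {2..d}))"
proof -
  have d0: "d > 0" using assms(1) by simp
  obtain \<delta> where \<delta>: "\<delta> > 0" "\<forall>\<sigma>\<in>F. \<delta> \<le> (\<Sum>l\<in>Lset d. (Qr d \<sigma> l - Qr d \<rho> l)\<^sup>2)"
    using gap[OF assms(2,3,4,5) d0] by blast
  define \<delta>' where "\<delta>' = min \<delta> 1"
  define c :: real where "c = (3/2) / (3/2 - \<delta>'/8)"
  have dp: "0 < \<delta>'" "\<delta>' \<le> 1" "\<delta>' \<le> \<delta>" using \<delta>(1) unfolding \<delta>'_def by auto
  have c1: "c > 1" unfolding c_def using dp by (simp add: field_simps)
  have pd: "prob_dist {0::nat,1} (\<lambda>_. 1/2)" unfolding prob_dist_def by simp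
  have chs: "\<forall>m\<in>{2..d}. \<forall>i\<in>{0::nat,1}. channel (d ^ m) ((\<lambda>_. 2::nat) m) (LamF d \<rho> m i)"
  proof (intro ballI)
    fix m i assume m: "m \<in> {2..d}" and i: "i \<in> {0::nat,1}"
    show "channel (d ^ m) ((\<lambda>_. 2::nat) m) (LamF d \<rho> m i)"
    proof (cases "m = 2")
      case True
      then show ?thesis using i ch_Lam0[OF assms(4) d0] ch_Lam1[OF d0]
        by (auto simp: LamF_def power2_eq_square)
    next
      case False
      then show ?thesis using ch_Lamo[of "d^m"] by (simp add: LamF_def)
    qed
  qed
  have rho_val: "opt_p_succ {0,1} (\<lambda>_. 1/2) (LamF d \<rho> 2) 2 (tensor_pow 2 \<rho>) = (1 + (1/2 - 1/8 * 0)) / 2"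
  proof -
    note o = opt_formula[OF assms(4) assms(4) d0]
    have "(\<Sum>J\<in>Lset d \<times> Lset d. Tau d \<rho> J * Qr d \<rho> (fst J) * Qr d \<rho> (snd J)) = 1/2 - 1/8 * (\<Sum>l\<in>Lset d. (Qr d \<rho> l - Qr d \<rho> l)\<^sup>2)"
      unfolding Tau_def by (rule quad_ident) (use Qr_props[OF assms(4) d0] in auto)
    then show ?thesis using o by simp
  qed
  have main: "c \<le> Max ((\<lambda>m. opt_p_succ {0,1} (\<lambda>_. 1/2) (LamF d \<rho> m) ((\<lambda>_. 2::nat) m) (tensor_pow m \<rho>)
                          / opt_p_succ {0,1} (\<lambda>_. 1/2) (LamF d \<rho> m) ((\<lambda>_. 2::nat) m) (tensor_pow m \<sigma>)) ` {2..d})"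
    if \<sigma>: "\<sigma> \<in> F" for \<sigma>
  proof -
    have sd: "\<sigma> \<in> density_ops d" using \<sigma> assms(2) by blast
    define D where "D = (\<Sum>l\<in>Lset d. (Qr d \<sigma> l - Qr d \<rho> l)\<^sup>2)"
    note o = opt_formula[OF assms(4) sd d0]
    have qi: "(\<Sum>J\<in>Lset d \<times> Lset d. Tau d \<rho> J * Qr d \<sigma> (fst J) * Qr d \<sigma> (snd J)) = 1/2 - 1/8 * D"
      unfolding Tau_def D_def by (rule quad_ident) (use Qr_props[OF assms(4) d0] Qr_props[OF sd d0] in auto)
    have sval: "opt_p_succ {0,1} (\<lambda>_. 1/2) (LamF d \<rho> 2) 2 (tensor_pow 2 \<sigma>) = (1 + (1/2 - 1/8 * D)) / 2"
      and nn: "0 \<le> 1/2 - 1/8 * D"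
      using o unfolding qi by auto
    have Dd: "\<delta>' \<le> D" using \<delta>(2) \<sigma> dp(3) unfolding D_def by force
    have "c \<le> ((1 + (1/2 - 1/8 * 0)) / 2) / ((1 + (1/2 - 1/8 * D)) / 2)"
      unfolding c_def by (rule ratio_bound[OF dp(1,2) Dd nn])
    also have "\<dots> = (\<lambda>m. opt_p_succ {0,1} (\<lambda>_. 1/2) (LamF d \<rho> m) ((\<lambda>_. 2::nat) m) (tensor_pow m \<rho>)
                          / opt_p_succ {0,1} (\<lambda>_. 1/2) (LamF d \<rho> m) ((\<lambda>_. 2::nat) m) (tensor_pow m \<sigma>)) 2"
      by (simp only: rho_val sval)
    also have "\<dots> \<le> Max ((\<lambda>m. opt_p_succ {0,1} (\<lambda>_. 1/2) (LamF d \<rho> m) ((\<lambda>_. 2::nat) m) (tensor_pow m \<rho>)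
                          / opt_p_succ {0,1} (\<lambda>_. 1/2) (LamF d \<rho> m) ((\<lambda>_. 2::nat) m) (tensor_pow m \<sigma>)) ` {2..d})"
      using assms(1) by (intro Max_ge) auto
    finally show ?thesis .
  qed
  show ?thesis
    apply (rule exI[of _ "{0,1}"])
    apply (rule exI[of _ "\<lambda>_. 1/2"])
    apply (rule exI[of _ "\<lambda>_. 2"])
    apply (rule exI[of _ "LamF d \<rho>"])
    using pd chs c1 main by blast
qed


end
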